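(* Let $\Pi$ be a problem with input in the black-white formalism. Suppose all node degrees are at most $\Delta$ and $\Pi$ has at most $L$ output labels. Suppose $\Pi$ cannot be solved in $0$ rounds by a deterministic white algorithm in the PN model, even if a solution of a problem $\Pi_{\mathrm{in}}$ is given as input. Then every randomized $0$-round white algorithm for $\Pi$, given a solution of $\Pi_{\mathrm{in}}$ as input, fails with probability at least $1/L^{\Delta^2}$.
   Context: A problem with input in the black-white formalism is $(\Sigma_{\mathrm{in}},\Sigma_{\mathrm{out}},\mathcal{N}=(\mathcal{N}^1,\dots,\mathcal{N}^\Delta),\mathcal{E}=(\mathcal{E}^1,\dots,\mathcal{E}^\delta),g)$. Here: - $\mathcal{N}^i$ and $\mathcal{E}^i$ are sets of cardinality-$i$ multisets of output labels, giving the allowed label multisets around white, resp. black, nodes of degree $i$; - $g:\Sigma_{\mathrm{in}}\to2^{\Sigma_{\mathrm{out}}}$ restricts the output on an edge given its input label. Instances are $2$-colored bipartite graphs with input labels on edges. "Given a solution of $\Pi_{\mathrm{in}}$" (where $\Pi_{\mathrm{in}}$ is a problem without inputs whose outputs are in $\Sigma_{\mathrm{in}}$) means the input labels form a valid solution of $\Pi_{\mathrm{in}}$. A $0$-round white algorithm in the PN model lets each white node choose output labels on its incident edges knowing only its degree, its port numbering and its incident input labels; in the randomized case it may also use private random bits. Failing means some constraint is violated, in particular at some black node, on some instance. *)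

theory Defs
  imports "HOL-Library.Multiset" "HOL-Probability.Product_PMF"
begin

text \<open>A problem with input: output labels, white constraints (indexed by degree),
  black constraints (indexed by degree), and the input-output compatibility map g.\<close>
record ('i, 'o) bw_problem =
  sigma_in  :: "'i set"
  sigma_out :: "'o set"
  wconstr   :: "nat \<Rightarrow> 'o multiset set"
  bconstr   :: "nat \<Rightarrow> 'o multiset set"
  gmap      :: "'i \<Rightarrow> 'o set"

record 'i bw_problem_noin =
  sigma    :: "'i set"
  wconstr0 :: "nat \<Rightarrow> 'i multiset set"
  bconstr0 :: "nat \<Rightarrow> 'i multiset set"

definition wf_problem :: "('i, 'o) bw_problem \<Rightarrow> bool" where
  "wf_problem P \<longleftrightarrow>
     (\<forall>d. \<forall>M \<in> wconstr P d. size M = d \<and> set_mset M \<subseteq> sigma_out P) \<and>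
     (\<forall>d. \<forall>M \<in> bconstr P d. size M = d \<and> set_mset M \<subseteq> sigma_out P) \<and>
     (\<forall>x \<in> sigma_in P. gmap P x \<subseteq> sigma_out P)"

definition wf_problem_noin :: "'i bw_problem_noin \<Rightarrow> bool" where
  "wf_problem_noin Q \<longleftrightarrow>
     (\<forall>d. \<forall>M \<in> wconstr0 Q d. size M = d \<and> set_mset M \<subseteq> sigma Q) \<and>
     (\<forall>d. \<forall>M \<in> bconstr0 Q d. size M = d \<and> set_mset M \<subseteq> sigma Q)"

text \<open>White nodes, black nodes and edges are natural numbers (white and black nodes live
  in separate name spaces). Each edge e joins white node wend e and black node bend e;
  port e is the port number of e at its white endpoint; inp e is its input label.\<close>
record 'i bw_instance =
  wnodes :: "nat set"
  bnodes :: "nat set"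
  edges  :: "nat set"
  wend   :: "nat \<Rightarrow> nat"
  bend   :: "nat \<Rightarrow> nat"
  port   :: "nat \<Rightarrow> nat"
  inp    :: "nat \<Rightarrow> 'i"

definition wedges :: "'i bw_instance \<Rightarrow> nat \<Rightarrow> nat set" where
  "wedges G w = {e \<in> edges G. wend G e = w}"

definition bedges :: "'i bw_instance \<Rightarrow> nat \<Rightarrow> nat set" where
  "bedges G b = {e \<in> edges G. bend G e = b}"

definition wdeg :: "'i bw_instance \<Rightarrow> nat \<Rightarrow> nat" where
  "wdeg G w = card (wedges G w)"

definition bdeg :: "'i bw_instance \<Rightarrow> nat \<Rightarrow> nat" where
  "bdeg G b = card (bedges G b)"

definition wf_instance :: "nat \<Rightarrow> 'i bw_instance \<Rightarrow> bool" where
  "wf_instance \<Delta> G \<longleftrightarrow>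
     finite (wnodes G) \<and> finite (bnodes G) \<and> finite (edges G) \<and>
     (\<forall>e \<in> edges G. wend G e \<in> wnodes G \<and> bend G e \<in> bnodes G) \<and>
     (\<forall>w \<in> wnodes G. 1 \<le> wdeg G w \<and> wdeg G w \<le> \<Delta>) \<and>
     (\<forall>b \<in> bnodes G. 1 \<le> bdeg G b \<and> bdeg G b \<le> \<Delta>) \<and>
     (\<forall>w \<in> wnodes G. bij_betw (port G) (wedges G w) {..<wdeg G w})"

definition valid_noin :: "'i bw_problem_noin \<Rightarrow> 'i bw_instance \<Rightarrow> (nat \<Rightarrow> 'i) \<Rightarrow> bool" where
  "valid_noin Q G lab \<longleftrightarrow>
     (\<forall>e \<in> edges G. lab e \<in> sigma Q) \<and>
     (\<forall>w \<in> wnodes G. image_mset lab (mset_set (wedges G w)) \<in> wconstr0 Q (wdeg G w)) \<and>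
     (\<forall>b \<in> bnodes G. image_mset lab (mset_set (bedges G b)) \<in> bconstr0 Q (bdeg G b))"

definition valid_out :: "('i, 'o) bw_problem \<Rightarrow> 'i bw_instance \<Rightarrow> (nat \<Rightarrow> 'o) \<Rightarrow> bool" where
  "valid_out P G out \<longleftrightarrow>
     (\<forall>e \<in> edges G. out e \<in> sigma_out P \<and> out e \<in> gmap P (inp G e)) \<and>
     (\<forall>w \<in> wnodes G. image_mset out (mset_set (wedges G w)) \<in> wconstr P (wdeg G w)) \<and>
     (\<forall>b \<in> bnodes G. image_mset out (mset_set (bedges G b)) \<in> bconstr P (bdeg G b))"

definition admissible :: "nat \<Rightarrow> 'i bw_problem_noin \<Rightarrow> 'i bw_instance \<Rightarrow> bool" where
  "admissible \<Delta> Q G \<longleftrightarrow> wf_instance \<Delta> G \<and> valid_noin Q G (inp G)"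

definition port_edge :: "'i bw_instance \<Rightarrow> nat \<Rightarrow> nat \<Rightarrow> nat" where
  "port_edge G w p = (THE e. e \<in> wedges G w \<and> port G e = p)"

definition wview :: "'i bw_instance \<Rightarrow> nat \<Rightarrow> 'i list" where
  "wview G w = map (\<lambda>p. inp G (port_edge G w p)) [0..<wdeg G w]"

text \<open>A deterministic 0-round white algorithm maps (degree, input labels in port order)
  to an output label for each port. Output of the algorithm on an edge:\<close>
type_synonym ('i, 'o) det_alg = "nat \<Rightarrow> 'i list \<Rightarrow> nat \<Rightarrow> 'o"

definition det_output :: "('i, 'o) det_alg \<Rightarrow> 'i bw_instance \<Rightarrow> nat \<Rightarrow> 'o" where
  "det_output D G e = D (wdeg G (wend G e)) (wview G (wend G e)) (port G e)"

text \<open>A randomized 0-round white algorithm: using private random bits, each white node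
  draws (independently of the other nodes) its port-indexed output according to a
  distribution that depends only on its degree and its port-ordered input labels.\<close>
type_synonym ('i, 'o) rand_alg = "nat \<Rightarrow> 'i list \<Rightarrow> (nat \<Rightarrow> 'o) pmf"

definition rand_outcome :: "('i, 'o) rand_alg \<Rightarrow> 'i bw_instance \<Rightarrow> (nat \<Rightarrow> nat \<Rightarrow> 'o) pmf" where
  "rand_outcome A G = Pi_pmf (wnodes G) (\<lambda>_. undefined) (\<lambda>w. A (wdeg G w) (wview G w))"

definition fail_prob :: "('i, 'o) bw_problem \<Rightarrow> ('i, 'o) rand_alg \<Rightarrow> 'i bw_instance \<Rightarrow> real" where
  "fail_prob P A G = measure_pmf.prob (rand_outcome A G)
     {c. \<not> valid_out P G (\<lambda>e. c (wend G e) (port G e))}"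

end

theory Submission
  imports Defs
begin

lemma core:
  fixes M :: "(nat \<Rightarrow> 'o) pmf" and S :: "'o set"
  assumes finS: "finite S" and cS: "card S \<le> L" and L1: "1 \<le> L"
  shows "\<exists>g. measure_pmf.prob M {f. (\<forall>p<d. f p = g p) \<or> (\<exists>p<d. f p \<notin> S)} \<ge> 1 / real L ^ d"
proof -
  define V where "V = PiE {..<d} (\<lambda>_. S)"
  define h where "h f = (if \<exists>p<d. f p \<notin> S then None else Some (restrict f {..<d}))" for f :: "nat \<Rightarrow> 'o"
  define M' where "M' = map_pmf h M"
  have finV: "finite V" unfolding V_def using finS by (intro finite_PiE) auto
  have cardV: "card V = card S ^ d" unfolding V_def by (simp add: card_PiE)
  have cardV': "real (card V) \<le> real L ^ d"
    using cardV cS by (metis of_nat_le_iff of_nat_power power_mono zero_le)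
  have setM': "set_pmf M' \<subseteq> insert None (Some ` V)"
    unfolding M'_def V_def by (auto simp: h_def)
  have "(\<Sum>x\<in>insert None (Some ` V). pmf M' x) = 1"
    using setM' finV by (intro sum_pmf_eq_1) auto
  then have sum1: "pmf M' None + (\<Sum>g\<in>V. pmf M' (Some g)) = 1"
    using finV by (simp add: sum.reindex)
  have key: "measure_pmf.prob M {f. (\<forall>p<d. f p = g p) \<or> (\<exists>p<d. f p \<notin> S)}
      \<ge> pmf M' None + pmf M' (Some g)" for g
  proof -
    have "pmf M' None + pmf M' (Some g) = measure_pmf.prob M' {None, Some g}"
      by (simp add: measure_measure_pmf_finite)
    also have "\<dots> = measure_pmf.prob M (h -` {None, Some g})"
      unfolding M'_def by simp
    also have "\<dots> \<le> measure_pmf.prob M {f. (\<forall>p<d. f p = g p) \<or> (\<exists>p<d. f p \<notin> S)}"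
    proof (rule measure_pmf.finite_measure_mono)
      show "h -` {None, Some g} \<subseteq> {f. (\<forall>p<d. f p = g p) \<or> (\<exists>p<d. f p \<notin> S)}"
        by (auto simp: h_def split: if_splits)
    qed simp
    finally show ?thesis .
  qed
  show ?thesis
  proof (cases "V = {}")
    case True
    then have "pmf M' None = 1" using sum1 by simp
    moreover have "1 / real L ^ d \<le> 1" using L1 by simp
    moreover have "pmf M' (Some undefined) \<ge> 0" by simp
    ultimately show ?thesis using key[of undefined] by (intro exI[of _ undefined]) linarith
  next
    case False
    have "\<exists>g0\<in>V. \<forall>g\<in>V. pmf M' (Some g) \<le> pmf M' (Some g0)"
    proof -
      let ?m = "Max ((\<lambda>g. pmf M' (Some g)) ` V)"
      have "?m \<in> (\<lambda>g. pmf M' (Some g)) ` V" using False finV by (intro Max_in) auto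
      then obtain g0 where "g0 \<in> V" "pmf M' (Some g0) = ?m" by auto
      then show ?thesis using finV by (intro bexI[of _ g0]) auto
    qed
    then obtain g0 where g0: "g0 \<in> V" "\<And>g. g \<in> V \<Longrightarrow> pmf M' (Some g) \<le> pmf M' (Some g0)" by blast
    have "(\<Sum>g\<in>V. pmf M' (Some g)) \<le> (\<Sum>g\<in>V. pmf M' (Some g0))"
      by (intro sum_mono g0)
    also have "\<dots> = real (card V) * pmf M' (Some g0)" by simp
    also have "\<dots> \<le> real L ^ d * pmf M' (Some g0)"
      using cardV' by (intro mult_right_mono) auto
    finally have le: "1 - pmf M' None \<le> real L ^ d * pmf M' (Some g0)" using sum1 by linarith
    define a where "a = pmf M' None"
    define b where "b = pmf M' (Some g0)"
    define N where "N = real L ^ d"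
    have N1: "N \<ge> 1" unfolding N_def using L1 by simp
    have a0: "a \<ge> 0" unfolding a_def by simp
    have "1 - a \<le> N * b" using le unfolding a_def b_def N_def .
    moreover have "N * a \<ge> a" using N1 a0 by (metis mult_right_mono mult_1)
    ultimately have "N * (a + b) \<ge> 1" by (simp add: distrib_left)
    then have "a + b \<ge> 1 / N" using N1 by (simp add: divide_le_eq mult.commute)
    then show ?thesis using key[of g0] unfolding a_def b_def N_def by (intro exI[of _ g0]) linarith
  qed
qed

lemma local_fail:
  assumes wf: "wf_instance \<Delta> G" and nv: "\<not> valid_out P G out1"
  shows "\<exists>F \<subseteq> edges G. card (wend G ` F) \<le> \<Delta> \<and>
           (\<forall>out2. (\<forall>e\<in>F. out2 e = out1 e) \<longrightarrow> \<not> valid_out P G out2)"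
proof -
  have finE: "finite (edges G)" using wf by (simp add: wf_instance_def)
  have wD: "\<And>w. w \<in> wnodes G \<Longrightarrow> 1 \<le> wdeg G w \<and> wdeg G w \<le> \<Delta>"
    using wf by (simp add: wf_instance_def)
  have bD: "\<And>b. b \<in> bnodes G \<Longrightarrow> bdeg G b \<le> \<Delta>"
    using wf by (simp add: wf_instance_def)
  have ends: "\<And>e. e \<in> edges G \<Longrightarrow> wend G e \<in> wnodes G"
    using wf by (simp add: wf_instance_def)
  consider (a) e where "e \<in> edges G" "\<not> (out1 e \<in> sigma_out P \<and> out1 e \<in> gmap P (inp G e))"
    | (b) w where "w \<in> wnodes G" "image_mset out1 (mset_set (wedges G w)) \<notin> wconstr P (wdeg G w)"
    | (c) b where "b \<in> bnodes G" "image_mset out1 (mset_set (bedges G b)) \<notin> bconstr P (bdeg G b)"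
    using nv unfolding valid_out_def by blast
  then show ?thesis
  proof cases
    case a
    have "card (wend G ` {e}) \<le> \<Delta>" using wD[OF ends[OF a(1)]] by simp
    moreover have "\<forall>out2. (\<forall>e'\<in>{e}. out2 e' = out1 e') \<longrightarrow> \<not> valid_out P G out2"
    proof (intro allI impI)
      fix out2 assume "\<forall>e'\<in>{e}. out2 e' = out1 e'"
      then have "out2 e = out1 e" by simp
      then have "\<not> (out2 e \<in> sigma_out P \<and> out2 e \<in> gmap P (inp G e))" using a(2) by simp
      then show "\<not> valid_out P G out2" using a(1) unfolding valid_out_def by blast
    qed
    ultimately show ?thesis using a by (intro exI[of _ "{e}"]) auto
  next
    case b
    have "wend G ` wedges G w \<subseteq> {w}" by (auto simp: wedges_def)
    then have "card (wend G ` wedges G w) \<le> card {w}" by (intro card_mono) auto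
    then have "card (wend G ` wedges G w) \<le> 1" by simp
    then have "card (wend G ` wedges G w) \<le> \<Delta>" using wD[OF b(1)] by linarith
    moreover have "\<forall>out2. (\<forall>e\<in>wedges G w. out2 e = out1 e) \<longrightarrow> \<not> valid_out P G out2"
    proof (intro allI impI)
      fix out2 assume eq: "\<forall>e\<in>wedges G w. out2 e = out1 e"
      have "image_mset out2 (mset_set (wedges G w)) = image_mset out1 (mset_set (wedges G w))"
        using eq finE by (intro image_mset_cong) (auto simp: wedges_def)
      then have "image_mset out2 (mset_set (wedges G w)) \<notin> wconstr P (wdeg G w)" using b(2) by simp
      then show "\<not> valid_out P G out2" using b(1) unfolding valid_out_def by blast
    qed
    ultimately show ?thesis by (intro exI[of _ "wedges G w"]) (auto simp: wedges_def)
  next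
    case c
    have "card (wend G ` bedges G b) \<le> card (bedges G b)"
      using finE by (intro card_image_le) (auto simp: bedges_def)
    then have "card (wend G ` bedges G b) \<le> \<Delta>" using bD[OF c(1)] by (simp add: bdeg_def)
    moreover have "\<forall>out2. (\<forall>e\<in>bedges G b. out2 e = out1 e) \<longrightarrow> \<not> valid_out P G out2"
    proof (intro allI impI)
      fix out2 assume eq: "\<forall>e\<in>bedges G b. out2 e = out1 e"
      have "image_mset out2 (mset_set (bedges G b)) = image_mset out1 (mset_set (bedges G b))"
        using eq finE by (intro image_mset_cong) (auto simp: bedges_def)
      then have "image_mset out2 (mset_set (bedges G b)) \<notin> bconstr P (bdeg G b)" using c(2) by simp
      then show "\<not> valid_out P G out2" using c(1) unfolding valid_out_def by blast
    qed
    ultimately show ?thesis by (intro exI[of _ "bedges G b"]) (auto simp: bedges_def)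
  qed
qed


theorem mainTheorem6:
  fixes P :: "('i, 'o) bw_problem" and Pin :: "'i bw_problem_noin"
    and \<Delta> L :: nat
  assumes "wf_problem P" and "wf_problem_noin Pin"
    and "sigma_in P = sigma Pin"
    and "finite (sigma_out P)" and "card (sigma_out P) \<le> L"
    and det_fail: "\<forall>D :: ('i, 'o) det_alg. \<exists>G. admissible \<Delta> Pin G \<and>
                      \<not> valid_out P G (det_output D G)"
  shows "\<forall>A :: ('i, 'o) rand_alg. \<exists>G. admissible \<Delta> Pin G \<and>
           fail_prob P A G \<ge> 1 / real L ^ (\<Delta>\<^sup>2)"
proof (intro allI)
  fix A :: "('i, 'o) rand_alg"
  define S where "S = sigma_out P"
  define E where "E d g = {f :: nat \<Rightarrow> 'o. (\<forall>p<d. f p = g p) \<or> (\<exists>p<d. f p \<notin> S)}" for d g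
  define D where "D d v = (SOME g. measure_pmf.prob (A d v) (E d g) \<ge> 1 / real L ^ d)" for d v
  have Dgood: "measure_pmf.prob (A d v) (E d (D d v)) \<ge> 1 / real L ^ d" if "1 \<le> L" for d v
  proof -
    have "\<exists>g. measure_pmf.prob (A d v) (E d g) \<ge> 1 / real L ^ d"
      unfolding E_def S_def using core[where S="sigma_out P" and L=L and M="A d v" and d=d] assms(4,5) that by blast
    then show ?thesis unfolding D_def by (rule someI_ex)
  qed
  obtain G where adm: "admissible \<Delta> Pin G" and nv: "\<not> valid_out P G (det_output D G)"
    using det_fail by blast
  have wf: "wf_instance \<Delta> G" using adm by (simp add: admissible_def)
  obtain F where F: "F \<subseteq> edges G" "card (wend G ` F) \<le> \<Delta>"
    "\<forall>out2. (\<forall>e\<in>F. out2 e = det_output D G e) \<longrightarrow> \<not> valid_out P G out2"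
    using local_fail[OF wf nv] by blast
  define W where "W = wend G ` F"
  have WV: "W \<subseteq> wnodes G" using wf F(1) by (auto simp: W_def wf_instance_def)
  have finV: "finite (wnodes G)" using wf by (simp add: wf_instance_def)
  have bij: "bij_betw (port G) (wedges G w) {..<wdeg G w}" if "w \<in> wnodes G" for w
    using wf that by (simp add: wf_instance_def)
  have degs: "1 \<le> wdeg G w \<and> wdeg G w \<le> \<Delta>" if "w \<in> wnodes G" for w
    using wf that by (simp add: wf_instance_def)
  define B where "B w = (if w \<in> W then E (wdeg G w) (D (wdeg G w) (wview G w)) else UNIV)" for w
  have sub: "Pi (wnodes G) B \<subseteq> {c. \<not> valid_out P G (\<lambda>e. c (wend G e) (port G e))}"
  proof
    fix c assume c: "c \<in> Pi (wnodes G) B"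
    show "c \<in> {c. \<not> valid_out P G (\<lambda>e. c (wend G e) (port G e))}"
    proof (cases "\<exists>w\<in>W. \<exists>p<wdeg G w. c w p \<notin> S")
      case True
      then obtain w p where w: "w \<in> W" "p < wdeg G w" "c w p \<notin> S" by blast
      have "p \<in> port G ` wedges G w" using w(2) bij[of w] w(1) WV
        by (auto simp: bij_betw_imp_surj_on)
      then obtain e where e: "e \<in> wedges G w" "port G e = p" by blast
      then have "e \<in> edges G" "wend G e = w" by (auto simp: wedges_def)
      then show ?thesis using w(3) e(2) by (auto simp: valid_out_def S_def)
    next
      case False
      have agree: "c w p = D (wdeg G w) (wview G w) p" if "w \<in> W" "p < wdeg G w" for w p
      proof -
        have "c w \<in> B w" using c that(1) WV by auto
        then show ?thesis using that False unfolding B_def E_def by auto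
      qed
      have "\<forall>e\<in>F. c (wend G e) (port G e) = det_output D G e"
      proof
        fix e assume e: "e \<in> F"
        have wW: "wend G e \<in> W" using e by (simp add: W_def)
        have "e \<in> wedges G (wend G e)" using e F(1) by (auto simp: wedges_def)
        then have "port G e < wdeg G (wend G e)" using bij[of "wend G e"] wW WV
          by (auto dest: bij_betwE)
        then show "c (wend G e) (port G e) = det_output D G e"
          using agree[OF wW] unfolding det_output_def by simp
      qed
      then have "\<not> valid_out P G (\<lambda>e. c (wend G e) (port G e))"
        using F(3) by (rule_tac allE[OF F(3), of "\<lambda>e. c (wend G e) (port G e)"]) auto
      then show ?thesis by simp
    qed
  qed
  have x01: "0 \<le> 1 / real L ^ \<Delta>" "1 / real L ^ \<Delta> \<le> 1"
  proof -
    show "0 \<le> 1 / real L ^ \<Delta>" by simp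
    show "1 / real L ^ \<Delta> \<le> 1"
    proof (cases "L = 0")
      case True then show ?thesis by (cases \<Delta>) auto
    next
      case False then have "real L ^ \<Delta> \<ge> 1" by simp
      then show ?thesis by (simp add: divide_le_eq)
    qed
  qed
  have node: "1 / real L ^ \<Delta> \<le> measure_pmf.prob (A (wdeg G w) (wview G w)) (B w)" if "w \<in> W" for w
  proof -
    have d: "1 \<le> wdeg G w" "wdeg G w \<le> \<Delta>" using degs[of w] that WV by auto
    show ?thesis
    proof (cases "L = 0")
      case True
      then have "1 / real L ^ \<Delta> = 0" using d by (cases \<Delta>) auto
      moreover have "0 \<le> measure_pmf.prob (A (wdeg G w) (wview G w)) (B w)" by simp
      ultimately show ?thesis by linarith
    next
      case False
      then have L1: "1 \<le> L" by simp
      have "1 / real L ^ \<Delta> \<le> 1 / real L ^ wdeg G w"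
        using L1 d by (intro divide_left_mono power_increasing) auto
      also have "\<dots> \<le> measure_pmf.prob (A (wdeg G w) (wview G w)) (B w)"
        using Dgood[OF L1] that by (simp add: B_def)
      finally show ?thesis .
    qed
  qed
  have "1 / real L ^ (\<Delta>\<^sup>2) = (1 / real L ^ \<Delta>) ^ \<Delta>"
    by (simp add: power_one_over power_mult power2_eq_square)
  also have "\<dots> \<le> (1 / real L ^ \<Delta>) ^ card W"
    using F(2) x01 unfolding W_def by (intro power_decreasing) auto
  also have "\<dots> = (\<Prod>w\<in>W. 1 / real L ^ \<Delta>)" by simp
  also have "\<dots> \<le> (\<Prod>w\<in>W. measure_pmf.prob (A (wdeg G w) (wview G w)) (B w))"
    using node x01 by (intro prod_mono) auto
  also have "\<dots> = (\<Prod>w\<in>wnodes G. measure_pmf.prob (A (wdeg G w) (wview G w)) (B w))"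
  proof -
    have "(\<Prod>w\<in>wnodes G. measure_pmf.prob (A (wdeg G w) (wview G w)) (B w))
        = (\<Prod>w\<in>wnodes G. if w \<in> W then measure_pmf.prob (A (wdeg G w) (wview G w)) (B w) else 1)"
      by (intro prod.cong) (auto simp: B_def)
    also have "\<dots> = (\<Prod>w\<in>wnodes G \<inter> W. measure_pmf.prob (A (wdeg G w) (wview G w)) (B w))"
      using finV by (simp add: prod.inter_restrict)
    also have "wnodes G \<inter> W = W" using WV by blast
    finally show ?thesis by simp
  qed
  also have "\<dots> = measure_pmf.prob (rand_outcome A G) (Pi (wnodes G) B)"
    unfolding rand_outcome_def using finV by (simp add: measure_Pi_pmf_Pi)
  also have "\<dots> \<le> fail_prob P A G"
    unfolding fail_prob_def using sub by (intro measure_pmf.finite_measure_mono) auto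
  finally show "\<exists>G. admissible \<Delta> Pin G \<and> fail_prob P A G \<ge> 1 / real L ^ (\<Delta>\<^sup>2)"
    using adm by blast
qed

end
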